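(* Let $\lambda>0$, $\gamma\ge0$, $\omega\in[-\pi,\pi]$, and let $\theta\sim\mathrm{GCPC}(\omega,\gamma,\lambda)$, with $\theta$ represented in $(\omega-\pi,\omega+\pi]$. Put $\delta=(\sqrt{\gamma^2+1}-1)/\gamma$ (with $\delta=0$ if $\gamma=0$). For $t\in(\omega-\pi,\omega+\pi)$ define $$\psi(t)=\operatorname{atan2}\bigl(\sin(t-\omega),\ \sqrt{\lambda}\cos(t-\omega)\bigr)\in(-\pi,\pi).$$ Then for all $\omega-\pi<a\le b<\omega+\pi$, $$P(a\le\theta\le b)=\frac{1}{\pi}\left[\arctan\!\left(\frac{1+\delta}{1-\delta}\tan\frac{\psi(b)}{2}\right)-\arctan\!\left(\frac{1+\delta}{1-\delta}\tan\frac{\psi(a)}{2}\right)\right].$$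
   Context: For $\lambda>0$, $\gamma\ge0$ and $\omega\in[-\pi,\pi]$, the distribution $\mathrm{GCPC}(\omega,\gamma,\lambda)$ is the distribution on the circle with density $$f(\theta)=\frac{1}{2\pi\sqrt{\lambda}\,\bigl(b\sqrt{\gamma^2+1}-\gamma\cos\phi\,\sqrt{b}\bigr)},\qquad \phi=\theta-\omega,\quad b=\cos^2\phi+\frac{\sin^2\phi}{\lambda}.$$ The function $\operatorname{atan2}(y,x)\in(-\pi,\pi]$ is the standard two-argument arctangent, i.e. the polar angle of the point $(x,y)\ne(0,0)$. *)

theory Defs
  imports "HOL-Probability.Probability"
begin

definition atan2 :: "real \<Rightarrow> real \<Rightarrow> real" where
  "atan2 y x = Arg (Complex x y)"

definition gcpc_pdf :: "real \<Rightarrow> real \<Rightarrow> real \<Rightarrow> real \<Rightarrow> real" where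
  "gcpc_pdf \<omega> \<gamma> lam \<theta> =
     (let \<phi> = \<theta> - \<omega>; b = (cos \<phi>)\<^sup>2 + (sin \<phi>)\<^sup>2 / lam
      in 1 / (2 * pi * sqrt lam * (b * sqrt (\<gamma>\<^sup>2 + 1) - \<gamma> * cos \<phi> * sqrt b)))"

definition gcpc_density :: "real \<Rightarrow> real \<Rightarrow> real \<Rightarrow> real \<Rightarrow> ennreal" where
  "gcpc_density \<omega> \<gamma> lam \<theta> =
     ennreal (indicator {\<omega> - pi<..\<omega> + pi} \<theta> * gcpc_pdf \<omega> \<gamma> lam \<theta>)"

definition gcpc_delta :: "real \<Rightarrow> real" where
  "gcpc_delta \<gamma> = (if \<gamma> = 0 then 0 else (sqrt (\<gamma>\<^sup>2 + 1) - 1) / \<gamma>)"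

definition gcpc_psi :: "real \<Rightarrow> real \<Rightarrow> real \<Rightarrow> real" where
  "gcpc_psi \<omega> lam t = atan2 (sin (t - \<omega>)) (sqrt lam * cos (t - \<omega>))"

end

theory Submission
  imports Defs
begin

lemma delta_K: assumes "\<gamma> \<ge> 0"
  shows "(1 + gcpc_delta \<gamma>) / (1 - gcpc_delta \<gamma>) = \<gamma> + sqrt (\<gamma>\<^sup>2 + 1)"
proof (cases "\<gamma> = 0")
  case True then show ?thesis by (simp add: gcpc_delta_def)
next
  case False
  define C where "C = sqrt (\<gamma>\<^sup>2 + 1)"
  have C2: "C^2 = \<gamma>^2 + 1" unfolding C_def by simp
  have "C \<noteq> \<gamma> + 1"
  proof
    assume "C = \<gamma> + 1" then have "C^2 = (\<gamma>+1)^2" by simp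
    with C2 False show False by (simp add: power2_eq_square algebra_simps)
  qed
  then have ne: "\<gamma> - C + 1 \<noteq> 0" by auto
  have d: "gcpc_delta \<gamma> = (C - 1) / \<gamma>" using False by (simp add: gcpc_delta_def C_def)
  have "(1 + gcpc_delta \<gamma>) / (1 - gcpc_delta \<gamma>) = (\<gamma> + C - 1) / (\<gamma> - C + 1)"
  proof -
    have e1: "1 + (C-1)/\<gamma> = (\<gamma>+C-1)/\<gamma>" and e2: "1 - (C-1)/\<gamma> = (\<gamma>-C+1)/\<gamma>"
      using False by (simp_all add: field_simps)
    show ?thesis unfolding d e1 e2 using False by simp
  qed
  also have "\<dots> = \<gamma> + C" using ne C2 by (simp add: field_simps power2_eq_square)
  finally show ?thesis by (simp add: C_def)
qed

lemma tan_half_arg: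
  fixes x y :: real
  assumes "x + sqrt (x^2 + y^2) > 0"
  shows "tan (Arg (Complex x y) / 2) = y / (sqrt (x^2+y^2) + x)"
proof -
  have z: "Complex x y \<noteq> 0" using assms by (auto simp: complex_eq_iff)
  have n: "cmod (Complex x y) = sqrt (x^2+y^2)" by (simp add: cmod_def)
  have np: "sqrt (x^2+y^2) > 0" using z by (simp add: complex_eq_iff sum_power2_gt_zero_iff)
  have "tan (Arg (Complex x y) / 2) = sin (Arg (Complex x y)) / (cos (Arg (Complex x y)) + 1)"
    using tan_half[of "Arg (Complex x y) / 2"] by simp
  also have "\<dots> = (y / sqrt (x^2+y^2)) / (x / sqrt (x^2+y^2) + 1)"
    using z by (simp add: cos_Arg sin_Arg n)
  also have "\<dots> = y / (sqrt (x^2+y^2) + x)" using np by (simp add: field_simps)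
  finally show ?thesis .
qed

lemma deriv_F:
  fixes lam \<gamma> \<omega> t :: real
  assumes lam: "lam > 0" and g: "\<gamma> \<ge> 0" and p1: "-pi < t - \<omega>" and p2: "t - \<omega> < pi"
  defines "K \<equiv> \<gamma> + sqrt (\<gamma>\<^sup>2 + 1)"
  shows "((\<lambda>t. arctan (K * (sin (t - \<omega>) / (sqrt ((sqrt lam * cos (t - \<omega>))^2 + (sin (t - \<omega>))^2) + sqrt lam * cos (t - \<omega>)))) / pi)
     has_real_derivative gcpc_pdf \<omega> \<gamma> lam t) (at t)"
proof -
  define s where "s = sin (t - \<omega>)"
  define c where "c = cos (t - \<omega>)"
  define L where "L = sqrt lam"
  define R where "R = sqrt ((L * c)^2 + s^2)"
  define C where "C = sqrt (\<gamma>\<^sup>2 + 1)"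
  have L: "L > 0" "L^2 = lam" using lam by (auto simp: L_def)
  have sc: "s^2 + c^2 = 1" by (simp add: s_def c_def)
  have Rpos0: "(L * c)^2 + s^2 > 0"
  proof (cases "c = 0")
    case True then show ?thesis using sc by simp
  next
    case False then show ?thesis using L by (simp add: add_pos_nonneg)
  qed
  have R: "R > 0" "R^2 = (L*c)^2 + s^2" using Rpos0 by (auto simp: R_def)
  have D: "R + L * c > 0"
  proof (cases "s = 0")
    case True
    then have "t - \<omega> = 0" using sin_eq_0_pi[OF p1 p2] True unfolding s_def by simp
    then have "c = 1" by (simp add: c_def)
    with L R show ?thesis by simp
  next
    case False
    have "\<bar>L*c\<bar> = sqrt ((L*c)^2)" by simp
    also have "\<dots> < R" unfolding R_def apply (rule real_sqrt_less_mono) using False by simp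
    finally show ?thesis by linarith
  qed
  have d1: "((\<lambda>t. (L * cos (t - \<omega>))^2 + (sin (t - \<omega>))^2) has_real_derivative (2 * (L * c) * (L * (- s)) + 2 * s * c)) (at t)"
    unfolding s_def c_def by (auto intro!: derivative_eq_intros)
  have dR0: "((\<lambda>t. sqrt ((L * cos (t - \<omega>))^2 + (sin (t - \<omega>))^2)) has_real_derivative
     (inverse (sqrt ((L * c)^2 + s^2)) / 2 * (2 * (L * c) * (L * (- s)) + 2 * s * c))) (at t)"
    using DERIV_chain2[OF DERIV_real_sqrt[OF Rpos0[unfolded s_def c_def]] d1] unfolding s_def c_def .
  have "inverse (sqrt ((L * c)^2 + s^2)) / 2 * (2 * (L * c) * (L * (- s)) + 2 * s * c) = s*c*(1-lam)/R"
    unfolding R_def[symmetric] L(2)[symmetric] using R by (simp add: field_simps power2_eq_square)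
  with dR0 have dR: "((\<lambda>t. sqrt ((L * cos (t - \<omega>))^2 + (sin (t - \<omega>))^2)) has_real_derivative s*c*(1-lam)/R) (at t)"
    by simp
  have dc: "((\<lambda>t. L * cos (t - \<omega>)) has_real_derivative - (L * s)) (at t)"
    unfolding s_def by (auto intro!: derivative_eq_intros)
  have ds: "((\<lambda>t. sin (t - \<omega>)) has_real_derivative c) (at t)"
    unfolding c_def by (auto intro!: derivative_eq_intros)
  define D' where "D' = s*c*(1-lam)/R + - (L * s)"
  define D where "D = R + L * c"
  have Dt: "sqrt ((L * cos (t - \<omega>))^2 + (sin (t - \<omega>))^2) + L * cos (t - \<omega>) = D"
    by (simp add: D_def R_def s_def c_def)
  have dD: "((\<lambda>t. sqrt ((L * cos (t - \<omega>))^2 + (sin (t - \<omega>))^2) + L * cos (t - \<omega>)) has_real_derivative D') (at t)"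
    unfolding D'_def by (rule DERIV_add[OF dR dc])
  have Dne: "D \<noteq> 0" using D by (simp add: D_def)
  have dG: "((\<lambda>t. sin (t - \<omega>) / (sqrt ((L * cos (t - \<omega>))^2 + (sin (t - \<omega>))^2) + L * cos (t - \<omega>))) has_real_derivative
     (c * D - s * D') / (D * D)) (at t)"
    using DERIV_divide[OF ds dD] Dne unfolding Dt s_def by simp
  have G: "sin (t - \<omega>) / (sqrt ((L * cos (t - \<omega>))^2 + (sin (t - \<omega>))^2) + L * cos (t - \<omega>)) = s / D"
    unfolding Dt s_def ..
  have dF: "((\<lambda>t. arctan (K * (sin (t - \<omega>) / (sqrt ((L * cos (t - \<omega>))^2 + (sin (t - \<omega>))^2) + L * cos (t - \<omega>)))) / pi)
     has_real_derivative inverse (1 + (K * (s / D))^2) * (K * ((c * D - s * D') / (D * D))) / pi) (at t)"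
    using DERIV_cdivide[OF DERIV_chain2[OF DERIV_arctan DERIV_cmult[OF dG, of K]], of pi] unfolding G .
  have e1: "c * D - s * D' = L * D / R"
  proof -
    have "(c * D - s * D') * R = L * D"
      unfolding D'_def D_def L(2)[symmetric] using R(1) sc R(2)
      apply (simp add: field_simps)
      by algebra
    then show ?thesis using R(1) by (simp add: field_simps)
  qed
  have Cg: "C > \<gamma>"
  proof -
    have "\<gamma> = sqrt (\<gamma>^2)" using g by simp
    also have "\<dots> < C" unfolding C_def by (rule real_sqrt_less_mono) simp
    finally show ?thesis .
  qed
  have C2: "C^2 = \<gamma>^2 + 1" unfolding C_def by simp
  have RLc: "R \<ge> L * c"
  proof -
    have "L * c \<le> \<bar>L * c\<bar>" by simp
    also have "\<dots> = sqrt ((L*c)^2)" by simp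
    also have "\<dots> \<le> R" unfolding R_def by (rule real_sqrt_le_mono) simp
    finally show ?thesis .
  qed
  have pos: "R * C - \<gamma> * L * c > 0"
  proof -
    have "R * C > R * \<gamma>" using Cg R(1) by simp
    moreover have "R * \<gamma> \<ge> \<gamma> * L * c" using mult_right_mono[OF RLc g] by (simp add: mult_ac)
    ultimately show ?thesis by linarith
  qed
  have key: "2 * K * D * (R * C - \<gamma> * L * c) = D^2 + K^2 * s^2"
    unfolding K_def C_def[symmetric] D_def using C2 R(2) by algebra
  have sqb: "sqrt ((cos (t - \<omega>))^2 + (sin (t - \<omega>))^2 / lam) = R / L"
  proof -
    have "(cos (t - \<omega>))^2 + (sin (t - \<omega>))^2 / lam = (R / L)^2"
      using R(2) L(1) unfolding L(2)[symmetric] by (simp add: field_simps s_def c_def power2_eq_square)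
    then show ?thesis using R(1) L(1) by simp
  qed
  have pdf: "gcpc_pdf \<omega> \<gamma> lam t = L / (2 * pi * R * (R * C - \<gamma> * L * c))"
  proof -
    have "gcpc_pdf \<omega> \<gamma> lam t = 1 / (2 * pi * L * ((R/L)^2 * C - \<gamma> * c * (R / L)))"
      unfolding gcpc_pdf_def Let_def sqb
      using R(2) L by (simp add: field_simps s_def c_def power2_eq_square C_def L_def)
    also have "\<dots> = L / (2 * pi * R * (R * C - \<gamma> * L * c))"
      using L(1) R(1) pos by (simp add: field_simps power2_eq_square)
    finally show ?thesis .
  qed
  have "inverse (1 + (K * (s / D))^2) * (K * ((c * D - s * D') / (D * D))) / pi = gcpc_pdf \<omega> \<gamma> lam t"
  proof -
    have "inverse (1 + (K * (s / D))^2) * (K * ((c * D - s * D') / (D * D))) / pi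
        = K * L * D / (pi * R * (D^2 + K^2 * s^2))"
      unfolding e1 using Dne R(1) by (simp add: field_simps power2_eq_square)
    also have "\<dots> = K * L * D / (pi * R * (2 * K * D * (R * C - \<gamma> * L * c)))" unfolding key ..
    also have "\<dots> = L / (2 * pi * R * (R * C - \<gamma> * L * c))"
    proof -
      have "K > 0" unfolding K_def using g by (simp add: add_nonneg_pos)
      then show ?thesis using Dne R(1) pos by (simp add: field_simps)
    qed
    finally show ?thesis unfolding pdf .
  qed
  with dF show ?thesis unfolding L_def by simp
qed

lemma D_pos:
  fixes lam t :: real
  assumes lam: "lam > 0" and p1: "-pi < t" and p2: "t < pi"
  shows "sqrt lam * cos t + sqrt ((sqrt lam * cos t)^2 + (sin t)^2) > 0"
proof (cases "sin t = 0")
  case True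
  then have "t = 0" using sin_eq_0_pi[OF p1 p2] by simp
  then show ?thesis using lam by simp
next
  case False
  have "\<bar>sqrt lam * cos t\<bar> = sqrt ((sqrt lam * cos t)^2)" by simp
  also have "\<dots> < sqrt ((sqrt lam * cos t)^2 + (sin t)^2)"
    apply (rule real_sqrt_less_mono) using False by simp
  finally show ?thesis by linarith
qed

lemma pdf_nonneg:
  assumes lam: "lam > 0" and g: "\<gamma> \<ge> 0"
  shows "gcpc_pdf \<omega> \<gamma> lam x \<ge> 0"
proof -
  define c where "c = cos (x - \<omega>)"
  define b where "b = c^2 + (sin (x - \<omega>))^2 / lam"
  define C where "C = sqrt (\<gamma>^2 + 1)"
  have b0: "b \<ge> c^2" unfolding b_def using lam by simp
  then have b1: "sqrt b \<ge> c"
    using real_sqrt_le_mono[OF b0] by (metis abs_ge_self order.trans real_sqrt_abs)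
  have b2: "b \<ge> 0" using b0 by (meson order.trans zero_le_power2)
  have Cg: "C \<ge> \<gamma>" unfolding C_def using g
    by (metis add.right_neutral add_left_mono real_sqrt_abs abs_of_nonneg real_sqrt_le_mono zero_le_one)
  have "b * C \<ge> b * \<gamma>" using Cg b2 by (simp add: mult_left_mono)
  moreover have "b * \<gamma> = sqrt b * sqrt b * \<gamma>" using b2 by simp
  moreover have "sqrt b * sqrt b * \<gamma> \<ge> \<gamma> * c * sqrt b"
    using mult_right_mono[OF mult_right_mono[OF b1 g] real_sqrt_ge_zero[OF b2]] by (simp add: mult_ac)
  ultimately have "b * C - \<gamma> * c * sqrt b \<ge> 0" by linarith
  then have "2 * pi * sqrt lam * (b * C - \<gamma> * c * sqrt b) \<ge> 0" using lam by simp
  then show ?thesis unfolding gcpc_pdf_def Let_def b_def[symmetric] c_def[symmetric] C_def[symmetric] by simp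
qed

theorem mainTheorem5:
  fixes M :: "'s measure" and \<theta> :: "'s \<Rightarrow> real"
    and \<omega> \<gamma> lam a b :: real
  assumes "prob_space M"
    and "lam > 0" and "\<gamma> \<ge> 0" and "-pi \<le> \<omega>" and "\<omega> \<le> pi"
    and "distributed M lborel \<theta> (gcpc_density \<omega> \<gamma> lam)"
    and "\<omega> - pi < a" and "a \<le> b" and "b < \<omega> + pi"
  shows "measure M {x \<in> space M. a \<le> \<theta> x \<and> \<theta> x \<le> b} =
    (1 / pi) *
      (arctan ((1 + gcpc_delta \<gamma>) / (1 - gcpc_delta \<gamma>) * tan (gcpc_psi \<omega> lam b / 2))
     - arctan ((1 + gcpc_delta \<gamma>) / (1 - gcpc_delta \<gamma>) * tan (gcpc_psi \<omega> lam a / 2)))"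
proof -
  note lam = assms(2) and g = assms(3) and dist = assms(6)
  define K where "K = \<gamma> + sqrt (\<gamma>\<^sup>2 + 1)"
  have K: "(1 + gcpc_delta \<gamma>) / (1 - gcpc_delta \<gamma>) = K" unfolding K_def by (rule delta_K[OF g])
  define F where "F = (\<lambda>t. arctan (K * (sin (t - \<omega>) / (sqrt ((sqrt lam * cos (t - \<omega>))^2 + (sin (t - \<omega>))^2) + sqrt lam * cos (t - \<omega>)))) / pi)"
  have psi: "tan (gcpc_psi \<omega> lam t / 2) = sin (t - \<omega>) / (sqrt ((sqrt lam * cos (t - \<omega>))^2 + (sin (t - \<omega>))^2) + sqrt lam * cos (t - \<omega>))"
    if "\<omega> - pi < t" "t < \<omega> + pi" for t
    unfolding gcpc_psi_def atan2_def
    by (rule tan_half_arg) (rule D_pos[OF lam], use that in auto)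
  have rhs: "(1 / pi) *
      (arctan ((1 + gcpc_delta \<gamma>) / (1 - gcpc_delta \<gamma>) * tan (gcpc_psi \<omega> lam b / 2))
     - arctan ((1 + gcpc_delta \<gamma>) / (1 - gcpc_delta \<gamma>) * tan (gcpc_psi \<omega> lam a / 2))) = F b - F a"
    unfolding K F_def using psi[of a] psi[of b] assms(7-9) by (simp add: diff_divide_distrib)
  have int: "(gcpc_pdf \<omega> \<gamma> lam has_integral (F b - F a)) {a..b}"
  proof (rule fundamental_theorem_of_calculus[OF assms(8)])
    fix x assume x: "x \<in> {a..b}"
    have "(F has_real_derivative gcpc_pdf \<omega> \<gamma> lam x) (at x)"
      unfolding F_def K_def by (rule deriv_F[OF lam g]) (use x assms(7-9) in auto)
    then show "(F has_vector_derivative gcpc_pdf \<omega> \<gamma> lam x) (at x within {a..b})"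
      by (simp add: has_real_derivative_iff_has_vector_derivative has_vector_derivative_at_within)
  qed
  have nonneg: "F b - F a \<ge> 0"
    using has_integral_nonneg[OF int] pdf_nonneg[OF lam g] by blast
  have meas: "\<theta> \<in> measurable M lborel" using distributed_measurable[OF dist] .
  have fmeas: "gcpc_density \<omega> \<gamma> lam \<in> borel_measurable lborel" using distributed_borel_measurable[OF dist] .
  have "{x \<in> space M. a \<le> \<theta> x \<and> \<theta> x \<le> b} = \<theta> -` {a..b} \<inter> space M" by auto
  then have "measure M {x \<in> space M. a \<le> \<theta> x \<and> \<theta> x \<le> b} = measure (distr M lborel \<theta>) {a..b}"
    using measure_distr[OF meas, of "{a..b}"] by simp
  also have "\<dots> = measure (density lborel (gcpc_density \<omega> \<gamma> lam)) {a..b}"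
    using distributed_distr_eq_density[OF dist] by simp
  also have "\<dots> = enn2real (\<integral>\<^sup>+ x. gcpc_density \<omega> \<gamma> lam x * indicator {a..b} x \<partial>lborel)"
    unfolding measure_def using emeasure_density[OF fmeas, of "{a..b}"] by simp
  also have "(\<integral>\<^sup>+ x. gcpc_density \<omega> \<gamma> lam x * indicator {a..b} x \<partial>lborel)
      = (\<integral>\<^sup>+ x. ennreal (gcpc_pdf \<omega> \<gamma> lam x) * indicator {a..b} x \<partial>lborel)"
  proof (rule nn_integral_cong)
    fix x
    show "gcpc_density \<omega> \<gamma> lam x * indicator {a..b} x = ennreal (gcpc_pdf \<omega> \<gamma> lam x) * indicator {a..b} x"
      using assms(7-9) by (cases "x \<in> {a..b}") (auto simp: gcpc_density_def indicator_def)
  qed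
  also have "\<dots> = ennreal (F b - F a)"
    by (rule nn_integral_has_integral_lebesgue'[OF _ int]) (rule pdf_nonneg[OF lam g])
  also have "enn2real \<dots> = F b - F a" using nonneg by simp
  finally show ?thesis unfolding rhs .
qed

end
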